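(* Let $(\Omega,\mathcal A)$ be a measurable space. Suppose that to each non-empty compact set $L\subset\mathbb C^n$ is assigned a family $A(L)$ of continuous functions on $L$ such that whenever $Q\subset L$ is compact and $f\in A(L)$, then $f|_Q\in A(Q)$. Let $K$ be a uniformly separable random compact set in $\mathbb C^n$. Then $A_{[\Omega]}^{unif}(K)=A_{[\Omega]}(K)$.
   Context: A random compact set is a measurable map $K$ from $\Omega$ to the space of non-empty compact subsets of $\mathbb C^n$ with the Hausdorff distance and its Borel $\sigma$-algebra; it is uniformly separable if there is a countable $E\subset\mathbb C^n$ with $E\cap K(\omega)$ dense in $K(\omega)$ for all $\omega$. Let $\operatorname{Gr}K=\{(\omega,z)\in\Omega\times\mathbb C^n:z\in K(\omega)\}$ and $K^{-1}(z)=\{\omega:z\in K(\omega)\}$ (a measurable set). A generalized random function is $f:\operatorname{Gr}K\to\mathbb C$ such that for each $z$ with $K^{-1}(z)\ne\emptyset$, $f(\cdot,z):K^{-1}(z)\to\mathbb C$ is measurable. A generalized $A(K)$-random function is a generalized random function with $f(\omega,\cdot)\in A(K(\omega))$ for all $\omega$; generalized $C(K)$-random functions are those with $f(\omega,\cdot)$ continuous on $K(\omega)$ for all $\omega$. $A_{[\Omega]}(K)$ is the set of generalized $C(K)$-random functions $f$ for which there is a sequence of generalized $A(K)$-random functions $f_j$ with $f_j(\omega,\cdot)\to f(\omega,\cdot)$ uniformly on $K(\omega)$ for each $\omega$. $A_{[\Omega]}^{unif}(K)$ is the set of generalized $C(K)$-random functions $f$ for which there is a sequence of generalized $A(K)$-random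 functions $f_j$ with $f_j\to f$ uniformly on $\operatorname{Gr}K$. *)

theory Defs
  imports "HOL-Analysis.Analysis" "HOL-Probability.Probability"
begin

type_synonym 'n cvec = "complex ^ 'n"

definition hausdist :: "'a::metric_space set \<Rightarrow> 'a set \<Rightarrow> real" where
  "hausdist S T = max (SUP x\<in>S. infdist x T) (SUP y\<in>T. infdist y S)"

definition ne_compacts :: "'a::metric_space set set" where
  "ne_compacts = {S. compact S \<and> S \<noteq> {}}"

definition hausdorff_open :: "'a::metric_space set set \<Rightarrow> bool" where
  "hausdorff_open U \<longleftrightarrow> U \<subseteq> ne_compacts \<and>
     (\<forall>S\<in>U. \<exists>e>0. \<forall>T\<in>ne_compacts. hausdist S T < e \<longrightarrow> T \<in> U)"

definition hausdorff_borel :: "'a::metric_space set measure" where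
  "hausdorff_borel = sigma ne_compacts (Collect hausdorff_open)"

definition random_compact_set :: "'a measure \<Rightarrow> ('a \<Rightarrow> 'n::finite cvec set) \<Rightarrow> bool" where
  "random_compact_set M K \<longleftrightarrow> K \<in> M \<rightarrow>\<^sub>M hausdorff_borel"

definition uniformly_separable :: "'a measure \<Rightarrow> ('a \<Rightarrow> 'n::finite cvec set) \<Rightarrow> bool" where
  "uniformly_separable M K \<longleftrightarrow>
     (\<exists>E. countable E \<and> (\<forall>\<omega>\<in>space M. K \<omega> \<subseteq> closure (E \<inter> K \<omega>)))"

definition graph_rcs :: "'a measure \<Rightarrow> ('a \<Rightarrow> 'n::finite cvec set) \<Rightarrow> ('a \<times> 'n cvec) set" where
  "graph_rcs M K = Sigma (space M) K"

definition rcs_preimage :: "'a measure \<Rightarrow> ('a \<Rightarrow> 'n::finite cvec set) \<Rightarrow> 'n cvec \<Rightarrow> 'a set" where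
  "rcs_preimage M K z = {\<omega>\<in>space M. z \<in> K \<omega>}"

text \<open>Functions are total; only their values on the graph of K matter.\<close>
definition gen_random_function ::
  "'a measure \<Rightarrow> ('a \<Rightarrow> 'n::finite cvec set) \<Rightarrow> ('a \<Rightarrow> 'n cvec \<Rightarrow> complex) \<Rightarrow> bool" where
  "gen_random_function M K f \<longleftrightarrow>
     (\<forall>z. rcs_preimage M K z \<noteq> {} \<longrightarrow>
        (\<lambda>\<omega>. f \<omega> z) \<in> borel_measurable (restrict_space M (rcs_preimage M K z)))"

definition in_fam :: "('n cvec set \<Rightarrow> ('n cvec \<Rightarrow> complex) set) \<Rightarrow> 'n cvec set \<Rightarrow> ('n cvec \<Rightarrow> complex) \<Rightarrow> bool" where
  "in_fam A L g \<longleftrightarrow> (\<exists>h\<in>A L. \<forall>x\<in>L. g x = h x)"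

definition gen_A_random_function ::
  "('n cvec set \<Rightarrow> ('n cvec \<Rightarrow> complex) set) \<Rightarrow> 'a measure \<Rightarrow> ('a \<Rightarrow> 'n::finite cvec set)
     \<Rightarrow> ('a \<Rightarrow> 'n cvec \<Rightarrow> complex) \<Rightarrow> bool" where
  "gen_A_random_function A M K f \<longleftrightarrow>
     gen_random_function M K f \<and> (\<forall>\<omega>\<in>space M. in_fam A (K \<omega>) (f \<omega>))"

definition gen_C_random_function ::
  "'a measure \<Rightarrow> ('a \<Rightarrow> 'n::finite cvec set) \<Rightarrow> ('a \<Rightarrow> 'n cvec \<Rightarrow> complex) \<Rightarrow> bool" where
  "gen_C_random_function M K f \<longleftrightarrow>
     gen_random_function M K f \<and> (\<forall>\<omega>\<in>space M. continuous_on (K \<omega>) (f \<omega>))"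

definition A_Omega ::
  "('n cvec set \<Rightarrow> ('n cvec \<Rightarrow> complex) set) \<Rightarrow> 'a measure \<Rightarrow> ('a \<Rightarrow> 'n::finite cvec set)
     \<Rightarrow> ('a \<Rightarrow> 'n cvec \<Rightarrow> complex) \<Rightarrow> bool" where
  "A_Omega A M K f \<longleftrightarrow> gen_C_random_function M K f \<and>
     (\<exists>fs::nat \<Rightarrow> 'a \<Rightarrow> 'n cvec \<Rightarrow> complex. (\<forall>j. gen_A_random_function A M K (fs j)) \<and>
        (\<forall>\<omega>\<in>space M. uniform_limit (K \<omega>) (\<lambda>j. fs j \<omega>) (f \<omega>) sequentially))"

definition A_Omega_unif ::
  "('n cvec set \<Rightarrow> ('n cvec \<Rightarrow> complex) set) \<Rightarrow> 'a measure \<Rightarrow> ('a \<Rightarrow> 'n::finite cvec set)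
     \<Rightarrow> ('a \<Rightarrow> 'n cvec \<Rightarrow> complex) \<Rightarrow> bool" where
  "A_Omega_unif A M K f \<longleftrightarrow> gen_C_random_function M K f \<and>
     (\<exists>fs::nat \<Rightarrow> 'a \<Rightarrow> 'n cvec \<Rightarrow> complex. (\<forall>j. gen_A_random_function A M K (fs j)) \<and>
        uniform_limit (graph_rcs M K) (\<lambda>j (\<omega>, z). fs j \<omega> z) (\<lambda>(\<omega>, z). f \<omega> z) sequentially)"

end

theory Submission
  imports Defs
begin

lemma K_ne:
  assumes "random_compact_set M K" "\<omega> \<in> space M"
  shows "K \<omega> \<in> ne_compacts"
proof -
  have "K \<in> M \<rightarrow>\<^sub>M hausdorff_borel" using assms(1) by (simp add: random_compact_set_def)
  then have "K \<omega> \<in> space hausdorff_borel" using assms(2) by (rule measurable_space)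
  then show ?thesis by (simp add: hausdorff_borel_def space_measure_of_conv)
qed

lemma notin_open:
  fixes z :: "'a::metric_space"
  shows "hausdorff_open {S\<in>ne_compacts. z \<notin> S}"
  unfolding hausdorff_open_def
proof (intro conjI ballI)
  fix S assume S: "S \<in> {S\<in>ne_compacts. z \<notin> S}"
  then have Sc: "compact S" "S \<noteq> {}" "z \<notin> S" by (auto simp: ne_compacts_def)
  have pos: "infdist z S > 0"
    using Sc in_closed_iff_infdist_zero[of S z] compact_imp_closed infdist_nonneg[of z S]
    by force
  show "\<exists>e>0. \<forall>T\<in>ne_compacts. hausdist S T < e \<longrightarrow> T \<in> {S \<in> ne_compacts. z \<notin> S}"
  proof (intro exI[of _ "infdist z S"] conjI pos ballI impI)
    fix T assume T: "T \<in> ne_compacts" and h: "hausdist S T < infdist z S"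
    have Tc: "compact T" using T by (simp add: ne_compacts_def)
    show "T \<in> {S \<in> ne_compacts. z \<notin> S}"
    proof (rule ccontr)
      assume "T \<notin> {S \<in> ne_compacts. z \<notin> S}"
      then have zT: "z \<in> T" using T by auto
      have "compact ((\<lambda>y. infdist y S) ` T)"
        by (rule compact_continuous_image[OF continuous_on_infdist[OF continuous_on_id] Tc])
      then have "bdd_above ((\<lambda>y. infdist y S) ` T)"
        by (simp add: bounded_imp_bdd_above compact_imp_bounded)
      then have "infdist z S \<le> (SUP y\<in>T. infdist y S)" using zT by (rule cSUP_upper2) simp
      also have "\<dots> \<le> hausdist S T" by (simp add: hausdist_def)
      finally show False using h by simp
    qed
  qed
qed auto

lemma preimage_sets:
  assumes "random_compact_set M K"
  shows "rcs_preimage M K z \<in> sets M"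
proof -
  let ?U = "{S\<in>ne_compacts. z \<notin> S}"
  have sub: "Collect hausdorff_open \<subseteq> Pow ne_compacts" by (auto simp: hausdorff_open_def)
  have "?U \<in> sets hausdorff_borel"
    unfolding hausdorff_borel_def sets_measure_of[OF sub]
    using notin_open[of z] by (auto intro: sigma_sets.Basic)
  moreover have "K \<in> M \<rightarrow>\<^sub>M hausdorff_borel" using assms by (simp add: random_compact_set_def)
  ultimately have "K -` ?U \<inter> space M \<in> sets M" by (rule measurable_sets[rotated])
  then have "space M - (K -` ?U \<inter> space M) \<in> sets M" by auto
  moreover have "space M - (K -` ?U \<inter> space M) = rcs_preimage M K z"
    using K_ne[OF assms] by (auto simp: rcs_preimage_def)
  ultimately show ?thesis by simp
qed

theorem theorem7p4:
  fixes M :: "'a measure"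
    and A :: "(complex ^ 'n::finite) set \<Rightarrow> ((complex ^ 'n) \<Rightarrow> complex) set"
    and K :: "'a \<Rightarrow> (complex ^ 'n) set"
  assumes A_cont: "\<And>L g. compact L \<Longrightarrow> L \<noteq> {} \<Longrightarrow> g \<in> A L \<Longrightarrow> continuous_on L g"
    and A_restr: "\<And>L Q g. compact L \<Longrightarrow> L \<noteq> {} \<Longrightarrow> compact Q \<Longrightarrow> Q \<noteq> {} \<Longrightarrow> Q \<subseteq> L
                    \<Longrightarrow> g \<in> A L \<Longrightarrow> in_fam A Q g"
    and K_rcs: "random_compact_set M K"
    and K_sep: "uniformly_separable M K"
  shows "A_Omega_unif A M K f \<longleftrightarrow> A_Omega A M K f"
proof
  assume H: "A_Omega_unif A M K f"
  then obtain fs where fsA: "\<forall>j. gen_A_random_function A M K (fs j)"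
    and ul: "uniform_limit (graph_rcs M K) (\<lambda>j (\<omega>, z). fs j \<omega> z) (\<lambda>(\<omega>, z). f \<omega> z) sequentially"
    unfolding A_Omega_unif_def by blast
  have "\<forall>\<omega>\<in>space M. uniform_limit (K \<omega>) (\<lambda>j. fs j \<omega>) (f \<omega>) sequentially"
  proof
    fix \<omega> assume w: "\<omega> \<in> space M"
    show "uniform_limit (K \<omega>) (\<lambda>j. fs j \<omega>) (f \<omega>) sequentially"
      unfolding uniform_limit_iff
    proof (intro allI impI)
      fix e :: real assume "e > 0"
      then have "\<forall>\<^sub>F n in sequentially. \<forall>x\<in>graph_rcs M K.
          dist ((\<lambda>(\<omega>, z). fs n \<omega> z) x) ((\<lambda>(\<omega>, z). f \<omega> z) x) < e"
        using ul unfolding uniform_limit_iff by blast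
      then show "\<forall>\<^sub>F n in sequentially. \<forall>x\<in>K \<omega>. dist (fs n \<omega> x) (f \<omega> x) < e"
        by eventually_elim (use w in \<open>auto simp: graph_rcs_def\<close>)
    qed
  qed
  then show "A_Omega A M K f" using H fsA unfolding A_Omega_def A_Omega_unif_def by blast
next
  assume H: "A_Omega A M K f"
  then obtain fs where fsA: "\<And>j. gen_A_random_function A M K (fs j)"
    and ul: "\<And>\<omega>. \<omega>\<in>space M \<Longrightarrow> uniform_limit (K \<omega>) (\<lambda>j. fs j \<omega>) (f \<omega>) sequentially"
    and fC: "gen_C_random_function M K f"
    unfolding A_Omega_def by blast
  obtain E where Ec: "countable E" and Ed: "\<And>\<omega>. \<omega>\<in>space M \<Longrightarrow> K \<omega> \<subseteq> closure (E \<inter> K \<omega>)"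
    using K_sep unfolding uniformly_separable_def by blast
  define c :: "nat \<Rightarrow> real" where "c k = 1 / (real k + 1)" for k
  have cpos: "c k > 0" for k by (simp add: c_def)
  define P where "P k j \<omega> = (\<forall>e\<in>E. e \<in> K \<omega> \<longrightarrow> norm (fs j \<omega> e - f \<omega> e) \<le> c k)" for k j \<omega>
  define J where "J k \<omega> = (LEAST j. P k j \<omega>)" for k \<omega>
  define g where "g k \<omega> z = fs (J k \<omega>) \<omega> z" for k \<omega> z
  have Kne: "\<And>\<omega>. \<omega> \<in> space M \<Longrightarrow> compact (K \<omega>) \<and> K \<omega> \<noteq> {}"
    using K_ne[OF K_rcs] by (auto simp: ne_compacts_def)
  have fscont: "continuous_on (K \<omega>) (fs j \<omega>)" if w: "\<omega> \<in> space M" for j \<omega>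
  proof -
    obtain h where "h \<in> A (K \<omega>)" "\<forall>x\<in>K \<omega>. fs j \<omega> x = h x"
      using fsA[of j] w unfolding gen_A_random_function_def in_fam_def by blast
    then show ?thesis using A_cont[of "K \<omega>" h] Kne[OF w]
      by (metis continuous_on_eq)
  qed
  have fcont: "continuous_on (K \<omega>) (f \<omega>)" if "\<omega> \<in> space M" for \<omega>
    using fC that by (simp add: gen_C_random_function_def)
  have Pex: "\<exists>j. P k j \<omega>" if w: "\<omega> \<in> space M" for k \<omega>
  proof -
    have "\<forall>\<^sub>F n in sequentially. \<forall>x\<in>K \<omega>. dist (fs n \<omega> x) (f \<omega> x) < c k"
      using ul[OF w] cpos[of k] unfolding uniform_limit_iff by blast
    then obtain n where "\<forall>x\<in>K \<omega>. dist (fs n \<omega> x) (f \<omega> x) < c k"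
      by (auto simp: eventually_sequentially)
    then have "P k n \<omega>" by (auto simp: P_def dist_norm less_imp_le)
    then show ?thesis by blast
  qed
  have bound: "norm (g k \<omega> z - f \<omega> z) \<le> c k" if w: "\<omega> \<in> space M" and z: "z \<in> K \<omega>" for k \<omega> z
  proof -
    let ?j = "J k \<omega>"
    have PJ: "P k ?j \<omega>" unfolding J_def using Pex[OF w] by (metis LeastI)
    let ?h = "\<lambda>x. fs ?j \<omega> x - f \<omega> x"
    have hc: "continuous_on (K \<omega>) ?h" using fscont[OF w] fcont[OF w] by (intro continuous_intros)
    have cl: "closed (K \<omega> \<inter> ?h -` cball 0 (c k))"
      by (rule continuous_closed_preimage[OF hc]) (use Kne[OF w] compact_imp_closed in auto)
    have "E \<inter> K \<omega> \<subseteq> K \<omega> \<inter> ?h -` cball 0 (c k)" using PJ by (auto simp: P_def)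
    then have "closure (E \<inter> K \<omega>) \<subseteq> K \<omega> \<inter> ?h -` cball 0 (c k)" using cl by (rule closure_minimal)
    then have "z \<in> K \<omega> \<inter> ?h -` cball 0 (c k)" using Ed[OF w] z by blast
    then show ?thesis by (simp add: g_def)
  qed
  have Rsets: "\<And>z. rcs_preimage M K z \<in> sets M" using preimage_sets[OF K_rcs] .
  have predP: "Measurable.pred M (P k j)" for k j
  proof -
    have Q: "Measurable.pred M (\<lambda>\<omega>. e \<in> K \<omega> \<longrightarrow> norm (fs j \<omega> e - f \<omega> e) \<le> c k)" for e
    proof -
      let ?R = "rcs_preimage M K e"
      have "{\<omega>\<in>?R. norm (fs j \<omega> e - f \<omega> e) \<le> c k} \<in> sets M"
      proof (cases "?R = {}")
        case True then show ?thesis by simp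
      next
        case False
        have m1: "(\<lambda>\<omega>. fs j \<omega> e) \<in> borel_measurable (restrict_space M ?R)"
          using fsA[of j] False unfolding gen_A_random_function_def gen_random_function_def by blast
        have m2: "(\<lambda>\<omega>. f \<omega> e) \<in> borel_measurable (restrict_space M ?R)"
          using fC False unfolding gen_C_random_function_def gen_random_function_def by blast
        have "(\<lambda>\<omega>. norm (fs j \<omega> e - f \<omega> e)) \<in> borel_measurable (restrict_space M ?R)"
          using m1 m2 by measurable
        then have "{\<omega>\<in>space (restrict_space M ?R). norm (fs j \<omega> e - f \<omega> e) \<le> c k}
            \<in> sets (restrict_space M ?R)" by measurable
        moreover have "space (restrict_space M ?R) = ?R"
          using Rsets[of e] by (auto simp: space_restrict_space rcs_preimage_def)
        ultimately show ?thesis using Rsets[of e]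
          by (simp add: sets_restrict_space_iff rcs_preimage_def Int_absorb2)
      qed
      moreover have "{\<omega>\<in>space M. e \<in> K \<omega> \<longrightarrow> norm (fs j \<omega> e - f \<omega> e) \<le> c k}
          = (space M - ?R) \<union> {\<omega>\<in>?R. norm (fs j \<omega> e - f \<omega> e) \<le> c k}"
        by (auto simp: rcs_preimage_def)
      ultimately have "{\<omega>\<in>space M. e \<in> K \<omega> \<longrightarrow> norm (fs j \<omega> e - f \<omega> e) \<le> c k} \<in> sets M"
        using Rsets[of e] by (metis (no_types, lifting) sets.Diff sets.Un sets.top)
      then show ?thesis by (simp only: Measurable.pred_def)
    qed
    show ?thesis
    proof (cases "E = {}")
      case True then have "P k j = (\<lambda>_. True)" by (auto simp: P_def fun_eq_iff)
      then show ?thesis by (simp add: Measurable.pred_def)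
    next
      case False
      have "P k j = (\<lambda>\<omega>. \<forall>i::nat. from_nat_into E i \<in> K \<omega> \<longrightarrow>
          norm (fs j \<omega> (from_nat_into E i) - f \<omega> (from_nat_into E i)) \<le> c k)"
        unfolding P_def using range_from_nat_into[OF False Ec]
        by (intro ext) (metis rangeE rangeI)
      then show ?thesis using Q by (simp add: pred_intros_countable)
    qed
  qed
  have gA: "gen_A_random_function A M K (g k)" for k
    unfolding gen_A_random_function_def gen_random_function_def
  proof (intro conjI allI impI ballI)
    fix z assume "rcs_preimage M K z \<noteq> {}"
    let ?R = "rcs_preimage M K z"
    have mfs: "(\<lambda>\<omega>. fs j \<omega> z) \<in> borel_measurable (restrict_space M ?R)" for j
      using fsA[of j] \<open>?R \<noteq> {}\<close> unfolding gen_A_random_function_def gen_random_function_def by blast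
    have mJ: "J k \<in> measurable (restrict_space M ?R) (count_space UNIV)"
      unfolding J_def
      by (rule measurable_Least, rule measurable_restrict_space1) (rule predP)
    show "(\<lambda>\<omega>. g k \<omega> z) \<in> borel_measurable (restrict_space M ?R)"
      unfolding g_def by (rule measurable_compose_countable'[OF mfs mJ]) auto
  next
    fix \<omega> assume "\<omega> \<in> space M"
    then show "in_fam A (K \<omega>) (g k \<omega>)"
      using fsA[of "J k \<omega>"] unfolding g_def gen_A_random_function_def by blast
  qed
  have "uniform_limit (graph_rcs M K) (\<lambda>j (\<omega>, z). g j \<omega> z) (\<lambda>(\<omega>, z). f \<omega> z) sequentially"
    unfolding uniform_limit_iff
  proof (intro allI impI)
    fix e :: real assume "e > 0"
    then obtain N where N: "inverse (real (Suc N)) < e" using reals_Archimedean by blast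
    show "\<forall>\<^sub>F n in sequentially. \<forall>x\<in>graph_rcs M K.
        dist ((\<lambda>(\<omega>, z). g n \<omega> z) x) ((\<lambda>(\<omega>, z). f \<omega> z) x) < e"
      unfolding eventually_sequentially
    proof (intro exI[of _ N] allI impI ballI)
      fix n x assume n: "N \<le> n" and x: "x \<in> graph_rcs M K"
      obtain \<omega> z where xe: "x = (\<omega>, z)" "\<omega> \<in> space M" "z \<in> K \<omega>"
        using x by (auto simp: graph_rcs_def)
      have "c n \<le> inverse (real (Suc N))" using n
        by (simp add: c_def divide_simps)
      then show "dist ((\<lambda>(\<omega>, z). g n \<omega> z) x) ((\<lambda>(\<omega>, z). f \<omega> z) x) < e"
        using bound[OF xe(2,3), of n] N xe(1) by (simp add: dist_norm)
    qed
  qed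
  then show "A_Omega_unif A M K f" using fC gA unfolding A_Omega_unif_def by blast
qed

end
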